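(* Let $A$ be a compact convex set, $B$ a zonoid and $C$ a compact set in $\mathbb{R}^n$. Then $|A+B+C|+|A|\ge|A+B|+|A+C|$.
   Context: $|\cdot|$ is $n$-dimensional Lebesgue measure and $+$ is Minkowski addition. A zonotope is a Minkowski sum of finitely many line segments; a zonoid is a limit of zonotopes in the Hausdorff metric. *)

theory Defs
  imports "HOL-Analysis.Analysis" "HOL-Library.Set_Algebras"
begin

definition zonotope :: "'a::euclidean_space set \<Rightarrow> bool" where
  "zonotope Z \<longleftrightarrow> (\<exists>(k::nat) (a::nat \<Rightarrow> 'a) b.
      Z = {(\<Sum>i<k. x i) | x. \<forall>i<k. x i \<in> closed_segment (a i) (b i)})"

text \<open>Hausdorff distance of (nonempty bounded) sets.\<close>
definition hausdorff_dist :: "'a::euclidean_space set \<Rightarrow> 'a set \<Rightarrow> real" where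
  "hausdorff_dist S T = max (SUP x\<in>S. infdist x T) (SUP y\<in>T. infdist y S)"

definition zonoid :: "'a::euclidean_space set \<Rightarrow> bool" where
  "zonoid Z \<longleftrightarrow> compact Z \<and> Z \<noteq> {} \<and>
     (\<exists>P :: nat \<Rightarrow> 'a set. (\<forall>k. zonotope (P k)) \<and>
        (\<lambda>k. hausdorff_dist (P k) Z) \<longlonglongrightarrow> 0)"

end

theory Submission
  imports Defs
begin


lemma fiber_integral:
  fixes b :: "'a::euclidean_space"
  assumes b: "b \<in> Basis" and X: "X \<in> sets borel" and Y: "Y \<in> sets borel"
  shows "emeasure lborel X + emeasure lborel Y =
    (\<integral>\<^sup>+ x. (emeasure lborel {s. (\<Sum>i\<in>Basis - {b}. x i *\<^sub>R i) + s *\<^sub>R b \<in> X}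
            + emeasure lborel {s. (\<Sum>i\<in>Basis - {b}. x i *\<^sub>R i) + s *\<^sub>R b \<in> Y})
       \<partial>(Pi\<^sub>M (Basis - {b}) (\<lambda>_. lborel)))"
proof -
  interpret product_sigma_finite "\<lambda>_::'a. lborel::real measure" by standard
  define I where "I = Basis - {b}"
  define e where "e = (\<lambda>f::'a \<Rightarrow> real. \<Sum>i\<in>Basis. f i *\<^sub>R i)"
  define g where "g = (\<lambda>z::'a. indicator X z + indicator Y z :: ennreal)"
  have [measurable]: "X \<in> sets borel" "Y \<in> sets borel" using X Y by auto
  have gm[measurable]: "g \<in> borel_measurable borel" unfolding g_def by measurable
  have em[measurable]: "e \<in> measurable (Pi\<^sub>M Basis (\<lambda>_. lborel)) borel" unfolding e_def by measurable
  have BI: "Basis = insert b I" "finite I" "b \<notin> I" using b by (auto simp: I_def)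
  have "emeasure lborel X + emeasure lborel Y = (\<integral>\<^sup>+ z. g z \<partial>lborel)"
    unfolding g_def by (subst nn_integral_add) auto
  also have "\<dots> = (\<integral>\<^sup>+ z. g z \<partial>(distr (Pi\<^sub>M Basis (\<lambda>_. lborel)) borel e))"
    unfolding e_def using lborel_eq[where 'a='a] by metis
  also have "\<dots> = (\<integral>\<^sup>+ f. g (e f) \<partial>(Pi\<^sub>M Basis (\<lambda>_. lborel)))"
    by (rule nn_integral_distr) auto
  also have "\<dots> = (\<integral>\<^sup>+ f. g (e f) \<partial>(Pi\<^sub>M (insert b I) (\<lambda>_. lborel)))"
    using BI by simp
  also have "\<dots> = (\<integral>\<^sup>+ x. (\<integral>\<^sup>+ y. g (e (x(b := y))) \<partial>lborel) \<partial>(Pi\<^sub>M I (\<lambda>_. lborel)))"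
    by (rule product_nn_integral_insert) (use BI in auto)
  also have "\<dots> = (\<integral>\<^sup>+ x. (emeasure lborel {s. (\<Sum>i\<in>Basis - {b}. x i *\<^sub>R i) + s *\<^sub>R b \<in> X}
            + emeasure lborel {s. (\<Sum>i\<in>Basis - {b}. x i *\<^sub>R i) + s *\<^sub>R b \<in> Y})
       \<partial>(Pi\<^sub>M (Basis - {b}) (\<lambda>_. lborel)))"
    unfolding I_def[symmetric]
  proof (rule nn_integral_cong)
    fix x :: "'a \<Rightarrow> real"
    define p where "p = (\<Sum>i\<in>I. x i *\<^sub>R i)"
    have ex: "e (x(b := y)) = p + y *\<^sub>R b" for y
    proof -
      have "e (x(b := y)) = (x(b := y)) b *\<^sub>R b + (\<Sum>i\<in>I. (x(b := y)) i *\<^sub>R i)"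
        unfolding e_def BI(1) using BI(2,3) by (rule sum.insert)
      also have "(\<Sum>i\<in>I. (x(b := y)) i *\<^sub>R i) = p"
        unfolding p_def using BI(3) by (intro sum.cong) auto
      finally show ?thesis by (metis add.commute fun_upd_same)
    qed
    have mp[measurable]: "(\<lambda>y::real. p + y *\<^sub>R b) \<in> borel_measurable borel" by measurable
    have "(\<integral>\<^sup>+ y. g (e (x(b := y))) \<partial>lborel) = (\<integral>\<^sup>+ y. indicator {s. p + s *\<^sub>R b \<in> X} y + indicator {s. p + s *\<^sub>R b \<in> Y} y \<partial>lborel)"
      unfolding ex g_def by (intro nn_integral_cong) (auto simp: indicator_def)
    also have "\<dots> = emeasure lborel {s. p + s *\<^sub>R b \<in> X} + emeasure lborel {s. p + s *\<^sub>R b \<in> Y}"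
      by (subst nn_integral_add) auto
    finally show "(\<integral>\<^sup>+ y. g (e (x(b := y))) \<partial>lborel) = emeasure lborel {s. (\<Sum>i\<in>I. x i *\<^sub>R i) + s *\<^sub>R b \<in> X} + emeasure lborel {s. (\<Sum>i\<in>I. x i *\<^sub>R i) + s *\<^sub>R b \<in> Y}"
      unfolding p_def .
  qed
  finally show ?thesis .
qed


lemma fiber_ineq:
  fixes b :: "'a::euclidean_space"
  assumes b: "b \<in> Basis" and X: "X1 \<in> sets borel" "X2 \<in> sets borel" "Y1 \<in> sets borel" "Y2 \<in> sets borel"
    and le: "\<And>p. p \<bullet> b = 0 \<Longrightarrow> emeasure lborel {s. p + s *\<^sub>R b \<in> Y1} + emeasure lborel {s. p + s *\<^sub>R b \<in> Y2}
       \<le> emeasure lborel {s. p + s *\<^sub>R b \<in> X1} + emeasure lborel {s. p + s *\<^sub>R b \<in> X2}"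
  shows "emeasure lborel Y1 + emeasure lborel Y2 \<le> emeasure lborel X1 + emeasure lborel X2"
proof -
  have pb: "(\<Sum>i\<in>Basis - {b}. x i *\<^sub>R i) \<bullet> b = 0" for x :: "'a \<Rightarrow> real"
    using b by (auto simp: inner_sum_left inner_not_same_Basis intro!: sum.neutral)
  show ?thesis
    unfolding fiber_integral[OF b X(1,2)] fiber_integral[OF b X(3,4)]
    by (intro nn_integral_mono le pb)
qed

lemma fiber_integral_rev:
  fixes b :: "'a::euclidean_space"
  assumes b: "b \<in> Basis" and X: "X \<in> sets borel"
  shows "emeasure lborel X =
    (\<integral>\<^sup>+ y. (\<integral>\<^sup>+ x. indicator X ((\<Sum>i\<in>Basis - {b}. x i *\<^sub>R i) + y *\<^sub>R b)
       \<partial>(Pi\<^sub>M (Basis - {b}) (\<lambda>_. lborel))) \<partial>lborel)"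
proof -
  interpret product_sigma_finite "\<lambda>_::'a. lborel::real measure" by standard
  define I where "I = Basis - {b}"
  define e where "e = (\<lambda>f::'a \<Rightarrow> real. \<Sum>i\<in>Basis. f i *\<^sub>R i)"
  define g where "g = (\<lambda>z::'a. indicator X z :: ennreal)"
  have [measurable]: "X \<in> sets borel" using X by auto
  have gm[measurable]: "g \<in> borel_measurable borel" unfolding g_def by measurable
  have em[measurable]: "e \<in> measurable (Pi\<^sub>M Basis (\<lambda>_. lborel)) borel" unfolding e_def by measurable
  have BI: "Basis = insert b I" "finite I" "b \<notin> I" using b by (auto simp: I_def)
  have "emeasure lborel X = (\<integral>\<^sup>+ z. g z \<partial>lborel)"
    unfolding g_def by simp
  also have "\<dots> = (\<integral>\<^sup>+ z. g z \<partial>(distr (Pi\<^sub>M Basis (\<lambda>_. lborel)) borel e))"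
    unfolding e_def using lborel_eq[where 'a='a] by metis
  also have "\<dots> = (\<integral>\<^sup>+ f. g (e f) \<partial>(Pi\<^sub>M Basis (\<lambda>_. lborel)))"
    by (rule nn_integral_distr) auto
  also have "\<dots> = (\<integral>\<^sup>+ f. g (e f) \<partial>(Pi\<^sub>M (insert b I) (\<lambda>_. lborel)))"
    using BI by simp
  also have "\<dots> = (\<integral>\<^sup>+ y. (\<integral>\<^sup>+ x. g (e (x(b := y))) \<partial>(Pi\<^sub>M I (\<lambda>_. lborel))) \<partial>lborel)"
    by (rule product_nn_integral_insert_rev) (use BI in auto)
  also have "\<dots> = (\<integral>\<^sup>+ y. (\<integral>\<^sup>+ x. indicator X ((\<Sum>i\<in>Basis - {b}. x i *\<^sub>R i) + y *\<^sub>R b)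
       \<partial>(Pi\<^sub>M (Basis - {b}) (\<lambda>_. lborel))) \<partial>lborel)"
    unfolding I_def[symmetric]
  proof (intro nn_integral_cong)
    fix x :: "'a \<Rightarrow> real" and y :: real
    define p where "p = (\<Sum>i\<in>I. x i *\<^sub>R i)"
    have ex: "e (x(b := y)) = p + y *\<^sub>R b"
    proof -
      have "e (x(b := y)) = (x(b := y)) b *\<^sub>R b + (\<Sum>i\<in>I. (x(b := y)) i *\<^sub>R i)"
        unfolding e_def BI(1) using BI(2,3) by (rule sum.insert)
      also have "(\<Sum>i\<in>I. (x(b := y)) i *\<^sub>R i) = p"
        unfolding p_def using BI(3) by (intro sum.cong) auto
      finally show ?thesis by (metis add.commute fun_upd_same)
    qed
    show "g (e (x(b := y))) = indicator X ((\<Sum>i\<in>I. x i *\<^sub>R i) + y *\<^sub>R b)"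
      unfolding ex g_def p_def ..
  qed
  finally show ?thesis .
qed



lemma shear_box:
  fixes b w :: "'a::euclidean_space"
  assumes b: "b \<in> Basis" and wb: "w \<bullet> b = 0"
  shows "emeasure lborel {z. z - (z \<bullet> b) *\<^sub>R w \<in> cbox l h} = (\<Prod>i\<in>Basis. emeasure lborel {l \<bullet> i .. h \<bullet> i})"
proof -
  interpret product_sigma_finite "\<lambda>_::'a. lborel::real measure" by standard
  define I where "I = Basis - {b}"
  have BI: "Basis = insert b I" "finite I" "b \<notin> I" using b by (auto simp: I_def)
  define X where "X = {z. z - (z \<bullet> b) *\<^sub>R w \<in> cbox l h}"
  have Xm: "X \<in> sets borel" unfolding X_def by measurable
  define A where "A = (\<lambda>y i. {l \<bullet> i + y * (w \<bullet> i) .. h \<bullet> i + y * (w \<bullet> i)})"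
  have ind: "indicator X ((\<Sum>i\<in>I. x i *\<^sub>R i) + y *\<^sub>R b) =
      indicator {l \<bullet> b .. h \<bullet> b} y * (indicator (Pi\<^sub>E I (A y)) x :: ennreal)"
    if x: "x \<in> space (Pi\<^sub>M I (\<lambda>_. lborel))" for x y
  proof -
    define p where "p = (\<Sum>i\<in>I. x i *\<^sub>R i)"
    have pi: "p \<bullet> i = x i" if "i \<in> I" for i
    proof -
      have "p \<bullet> i = (\<Sum>ia\<in>I. x ia * (ia \<bullet> i))" unfolding p_def by (simp add: inner_sum_left)
      also have "\<dots> = (\<Sum>ia\<in>I. if ia = i then x ia else 0)"
        using that by (intro sum.cong) (auto simp: I_def inner_Basis)
      also have "\<dots> = x i" using that BI(2) by simp
      finally show ?thesis .
    qed
    have pb: "p \<bullet> b = 0"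
      unfolding p_def using b
      by (auto simp: I_def inner_sum_left inner_not_same_Basis intro!: sum.neutral)
    have zb: "(p + y *\<^sub>R b) \<bullet> b = y" using pb b by (simp add: inner_simps)
    have zi: "(p + y *\<^sub>R b - y *\<^sub>R w) \<bullet> i = x i - y * (w \<bullet> i)" if "i \<in> I" for i
    proof -
      have "b \<bullet> i = 0" using that b by (auto simp: I_def inner_not_same_Basis)
      then show ?thesis using pi[OF that] by (simp add: inner_simps)
    qed
    have zbb: "(p + y *\<^sub>R b - y *\<^sub>R w) \<bullet> b = y" using pb b wb by (simp add: inner_simps)
    have ext: "x \<in> extensional I" using x by (simp add: space_PiM PiE_def)
    have "(p + y *\<^sub>R b \<in> X) \<longleftrightarrow> (y \<in> {l \<bullet> b .. h \<bullet> b} \<and> x \<in> Pi\<^sub>E I (A y))"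
    proof -
      have "(p + y *\<^sub>R b \<in> X) \<longleftrightarrow> (\<forall>i\<in>Basis. l \<bullet> i \<le> (p + y *\<^sub>R b - y *\<^sub>R w) \<bullet> i \<and> (p + y *\<^sub>R b - y *\<^sub>R w) \<bullet> i \<le> h \<bullet> i)"
        unfolding X_def using zb by (simp add: mem_box del: inner_add_left inner_diff_left)
      also have "\<dots> \<longleftrightarrow> (y \<in> {l \<bullet> b .. h \<bullet> b} \<and> (\<forall>i\<in>I. x i \<in> A y i))"
        unfolding BI(1) using zi zbb by (auto simp: A_def algebra_simps)
      finally show ?thesis using ext by (auto simp: PiE_def)
    qed
    then show ?thesis unfolding p_def[symmetric] by (simp add: indicator_def)
  qed
  have "emeasure lborel X = (\<integral>\<^sup>+ y. (\<integral>\<^sup>+ x. indicator X ((\<Sum>i\<in>I. x i *\<^sub>R i) + y *\<^sub>R b)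
       \<partial>(Pi\<^sub>M I (\<lambda>_. lborel))) \<partial>lborel)"
    unfolding I_def by (rule fiber_integral_rev[OF b Xm])
  also have "\<dots> = (\<integral>\<^sup>+ y. (\<integral>\<^sup>+ x. indicator {l \<bullet> b .. h \<bullet> b} y * indicator (Pi\<^sub>E I (A y)) x
       \<partial>(Pi\<^sub>M I (\<lambda>_. lborel))) \<partial>lborel)"
    by (intro nn_integral_cong ind)
  also have "\<dots> = (\<integral>\<^sup>+ y. indicator {l \<bullet> b .. h \<bullet> b} y * (\<Prod>i\<in>I. emeasure lborel {l \<bullet> i .. h \<bullet> i}) \<partial>lborel)"
  proof (intro nn_integral_cong)
    fix y :: real
    have "(\<integral>\<^sup>+ x. indicator {l \<bullet> b .. h \<bullet> b} y * indicator (Pi\<^sub>E I (A y)) x \<partial>(Pi\<^sub>M I (\<lambda>_. lborel)))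
       = indicator {l \<bullet> b .. h \<bullet> b} y * emeasure (Pi\<^sub>M I (\<lambda>_. lborel)) (Pi\<^sub>E I (A y))"
      using BI(2) by (intro nn_integral_cmult_indicator) (auto intro!: sets_PiM_I_finite simp: A_def)
    also have "emeasure (Pi\<^sub>M I (\<lambda>_. lborel)) (Pi\<^sub>E I (A y)) = (\<Prod>i\<in>I. emeasure lborel (A y i))"
      using BI(2) by (intro emeasure_PiM) (auto simp: A_def)
    also have "\<dots> = (\<Prod>i\<in>I. emeasure lborel {l \<bullet> i .. h \<bullet> i})"
      by (intro prod.cong) (auto simp: A_def emeasure_lborel_Icc_eq)
    finally show "(\<integral>\<^sup>+ x. indicator {l \<bullet> b .. h \<bullet> b} y * indicator (Pi\<^sub>E I (A y)) x \<partial>(Pi\<^sub>M I (\<lambda>_. lborel)))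
       = indicator {l \<bullet> b .. h \<bullet> b} y * (\<Prod>i\<in>I. emeasure lborel {l \<bullet> i .. h \<bullet> i})" .
  qed
  also have "\<dots> = emeasure lborel {l \<bullet> b .. h \<bullet> b} * (\<Prod>i\<in>I. emeasure lborel {l \<bullet> i .. h \<bullet> i})"
    by (subst nn_integral_multc) auto
  also have "\<dots> = (\<Prod>i\<in>Basis. emeasure lborel {l \<bullet> i .. h \<bullet> i})"
    unfolding BI(1) using BI(2,3) by simp
  finally show ?thesis unfolding X_def .
qed



lemma shear_measure:
  fixes b w :: "'a::euclidean_space"
  assumes b: "b \<in> Basis" and wb: "w \<bullet> b = 0" and S: "S \<in> lmeasurable"
  shows "(\<lambda>x. x + (x \<bullet> b) *\<^sub>R w) ` S \<in> lmeasurable \<and>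
         measure lebesgue ((\<lambda>x. x + (x \<bullet> b) *\<^sub>R w) ` S) = measure lebesgue S"
proof -
  define L where "L = (\<lambda>x::'a. x + (x \<bullet> b) *\<^sub>R w)"
  have lin: "linear L" unfolding L_def
    by (auto simp: linear_iff algebra_simps inner_add_left scaleR_add_left)
  have img: "L ` cbox l h = {z. z - (z \<bullet> b) *\<^sub>R w \<in> cbox l h}" for l h
  proof -
    have Lb: "L x \<bullet> b = x \<bullet> b" for x unfolding L_def using wb by (simp add: inner_simps)
    show ?thesis
    proof safe
      fix x assume "x \<in> cbox l h" then show "L x - (L x \<bullet> b) *\<^sub>R w \<in> cbox l h"
        unfolding Lb by (simp add: L_def)
    next
      fix z assume z: "z - (z \<bullet> b) *\<^sub>R w \<in> cbox l h"
      have "(z - (z \<bullet> b) *\<^sub>R w) \<bullet> b = z \<bullet> b" using wb by (simp add: inner_simps)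
      then have "z = L (z - (z \<bullet> b) *\<^sub>R w)" unfolding L_def by simp
      then show "z \<in> L ` cbox l h" using z by blast
    qed
  qed
  have cb: "cbox l h = {z. z - (z \<bullet> b) *\<^sub>R (0::'a) \<in> cbox l h}" for l h by simp
  have "measure lebesgue (L ` cbox l h) = 1 * measure lebesgue (cbox l h)" for l h
  proof -
    have m1: "L ` cbox l h \<in> sets lborel" unfolding img by measurable
    have "emeasure lborel (L ` cbox l h) = emeasure lborel (cbox l h)"
      unfolding img using shear_box[OF b wb, of l h] shear_box[OF b, of 0 l h] cb[of l h] by simp
    then show ?thesis using m1 by (simp add: measure_def)
  qed
  from measure_linear_sufficient[OF lin S this]
  show ?thesis unfolding L_def by simp
qed



lemma emeasure_compact_eq:
  fixes Z :: "'a::euclidean_space set"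
  assumes "compact Z"
  shows "emeasure lborel Z = ennreal (measure lebesgue Z)"
proof -
  have Zb: "Z \<in> sets lborel" using assms by (simp add: borel_compact)
  have "emeasure lborel Z < \<infinity>" using assms by (intro emeasure_bounded_finite compact_imp_bounded)
  then have "emeasure lborel Z = ennreal (measure lborel Z)"
    by (intro emeasure_eq_ennreal_measure) auto
  also have "measure lborel Z = measure lebesgue Z" using Zb by simp
  finally show ?thesis .
qed

lemma ennreal_sum_le_iff:
  fixes a b c d :: real
  assumes "a \<ge> 0" "b \<ge> 0" "c \<ge> 0" "d \<ge> 0"
  shows "ennreal a + ennreal b \<le> ennreal c + ennreal d \<longleftrightarrow> a + b \<le> c + d"
  using assms by (simp add: ennreal_plus[symmetric] del: ennreal_plus)

lemma dir_ineq:
  fixes b u :: "'a::euclidean_space"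
  assumes b: "b \<in> Basis" and ub: "u \<bullet> b = 1"
    and cpt: "compact X1" "compact X2" "compact Y1" "compact Y2"
    and le: "\<And>p. p \<bullet> b = 0 \<Longrightarrow> emeasure lborel {s. p + s *\<^sub>R u \<in> Y1} + emeasure lborel {s. p + s *\<^sub>R u \<in> Y2}
       \<le> emeasure lborel {s. p + s *\<^sub>R u \<in> X1} + emeasure lborel {s. p + s *\<^sub>R u \<in> X2}"
  shows "measure lebesgue Y1 + measure lebesgue Y2 \<le> measure lebesgue X1 + measure lebesgue X2"
proof -
  define w where "w = u - b"
  have wb: "w \<bullet> b = 0" using ub b by (simp add: w_def inner_simps)
  have wb': "(- w) \<bullet> b = 0" using wb by simp
  define M where "M = (\<lambda>z::'a. z + (z \<bullet> b) *\<^sub>R (- w))"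
  have cM: "continuous_on UNIV M" unfolding M_def by (intro continuous_intros)
  have Mc: "compact (M ` Z)" if "compact Z" for Z
    using compact_continuous_image[OF continuous_on_subset[OF cM] that] by simp
  have Mm: "measure lebesgue (M ` Z) = measure lebesgue Z" if "compact Z" for Z
    using shear_measure[OF b wb' lmeasurable_compact[OF that]] unfolding M_def by simp
  have fib: "{s. p + s *\<^sub>R b \<in> M ` Z} = {s. p + s *\<^sub>R u \<in> Z}" if pb: "p \<bullet> b = 0" for p Z
  proof -
   have A: "p + s *\<^sub>R u \<in> Z" if sb: "p + s *\<^sub>R b \<in> M ` Z" for s
   proof -
    from sb obtain z where z: "z \<in> Z" "p + s *\<^sub>R b = M z" by auto
    have "(M z) \<bullet> b = z \<bullet> b" unfolding M_def using wb by (simp add: inner_simps)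
    then have zb: "z \<bullet> b = s" using z pb b by (metis inner_add_left inner_scaleR_left add_0 mult.right_neutral inner_Basis)
    have "p + s *\<^sub>R u = M z + (z \<bullet> b) *\<^sub>R w" using z(2) zb by (simp add: w_def algebra_simps)
    also have "\<dots> = z" unfolding M_def by simp
    finally show "p + s *\<^sub>R u \<in> Z" using z by simp
   qed
   have B: "p + s *\<^sub>R b \<in> M ` Z" if sZ: "p + s *\<^sub>R u \<in> Z" for s
   proof -
    have "(p + s *\<^sub>R u) \<bullet> b = s" using pb ub by (simp add: inner_simps)
    then have "M (p + s *\<^sub>R u) = p + s *\<^sub>R b" unfolding M_def by (simp add: w_def algebra_simps)
    then show "p + s *\<^sub>R b \<in> M ` Z" using sZ by (metis image_eqI)
   qed
   show ?thesis using A B by blast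
  qed
  have bor: "M ` Z \<in> sets borel" if "compact Z" for Z
    using Mc[OF that] by (simp add: borel_compact)
  have "emeasure lborel (M ` Y1) + emeasure lborel (M ` Y2) \<le> emeasure lborel (M ` X1) + emeasure lborel (M ` X2)"
    by (rule fiber_ineq[OF b bor[OF cpt(1)] bor[OF cpt(2)] bor[OF cpt(3)] bor[OF cpt(4)]])
       (simp add: fib le)
  then show ?thesis
    using cpt by (simp add: emeasure_compact_eq Mc Mm ennreal_sum_le_iff del: ennreal_plus)
qed



lemma compact_set_plus:
  fixes S T :: "'a::real_normed_vector set"
  assumes "compact S" "compact T" shows "compact (S + T)"
proof -
  have "S + T = {x + y | x y. x \<in> S \<and> y \<in> T}" by (auto simp: set_plus_def)
  then show ?thesis using compact_sums[OF assms] by simp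
qed

lemma oneD:
  fixes K1 A1 :: "real set" and t :: real
  assumes t: "t \<ge> 0" and K: "compact K1" and A: "compact A1" "convex A1" and AK: "A1 \<subseteq> K1"
  shows "emeasure lborel (A1 + {0..t}) + emeasure lborel K1 \<le> emeasure lborel (K1 + {0..t}) + emeasure lborel A1"
proof (cases "A1 = {}")
  case True
  have "K1 \<subseteq> K1 + {0..t}" using t by (force simp: set_plus_def)
  moreover have "K1 + {0..t} \<in> sets lborel" using compact_set_plus[OF K compact_Icc] by (simp add: borel_compact)
  ultimately have "emeasure lborel K1 \<le> emeasure lborel (K1 + {0..t})" by (intro emeasure_mono) auto
  then show ?thesis using True by simp
next
  case False
  obtain a c where ac: "A1 = {a..c}" using connected_compact_interval_1[of A1] A convex_connected by blast
  with False have "a \<le> c" by auto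
  have Aeq: "A1 + {0..t} = {a..c+t}"
  proof safe
    fix x assume "x \<in> A1 + {0..t}" then show "x \<in> {a..c+t}" unfolding ac by (auto simp: set_plus_def)
  next
    fix x assume x: "x \<in> {a..c+t}"
    show "x \<in> A1 + {0..t}"
    proof (cases "x \<le> c")
      case True then have "x = x + 0" "x \<in> A1" "0 \<in> {0..t}" using x t ac by auto
      then show ?thesis by (metis set_plus_intro)
    next
      case False then have "x = c + (x - c)" "c \<in> A1" "x - c \<in> {0..t}" using x t ac \<open>a \<le> c\<close> by auto
      then show ?thesis by (metis set_plus_intro)
    qed
  qed
  have "K1 \<noteq> {}" using False AK by auto
  then obtain m where m: "m \<in> K1" "\<And>x. x \<in> K1 \<Longrightarrow> x \<le> m" using compact_attains_sup[OF K] by blast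
  have sub: "K1 \<union> {m<..m+t} \<subseteq> K1 + {0..t}"
  proof
    fix x assume "x \<in> K1 \<union> {m<..m+t}"
    then show "x \<in> K1 + {0..t}"
    proof
      assume "x \<in> K1" then have "x = x + 0" "0 \<in> {0..t}" using t by auto
      then show ?thesis using \<open>x \<in> K1\<close> by (metis set_plus_intro)
    next
      assume x: "x \<in> {m<..m+t}"
      then have "x = m + (x - m)" "x - m \<in> {0..t}" by auto
      then show ?thesis using m(1) by (metis set_plus_intro)
    qed
  qed
  have Kb: "K1 \<in> sets lborel" using K by (simp add: borel_compact)
  have disj: "K1 \<inter> {m<..m+t} = {}" using m(2) by force
  have "emeasure lborel K1 + ennreal t = emeasure lborel (K1 \<union> {m<..m+t})"
    using plus_emeasure[OF Kb _ disj] t by simp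
  also have "\<dots> \<le> emeasure lborel (K1 + {0..t})"
    using sub compact_set_plus[OF K compact_Icc] by (intro emeasure_mono) (auto simp: borel_compact)
  finally have KK: "emeasure lborel K1 + ennreal t \<le> emeasure lborel (K1 + {0..t})" .
  have "emeasure lborel (A1 + {0..t}) + emeasure lborel K1 = ennreal (c - a) + (emeasure lborel K1 + ennreal t)"
    unfolding Aeq using \<open>a \<le> c\<close> t by (simp add: ennreal_plus[symmetric] del: ennreal_plus)
  also have "\<dots> \<le> ennreal (c - a) + emeasure lborel (K1 + {0..t})"
    using KK by (rule add_left_mono)
  also have "\<dots> = emeasure lborel (K1 + {0..t}) + emeasure lborel A1"
    using ac \<open>a \<le> c\<close> by (simp add: ac_simps)
  finally show ?thesis .
qed

lemma fib_compact:
  fixes v p :: "'a::euclidean_space"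
  assumes v: "v \<noteq> 0" and Z: "compact Z"
  shows "compact {s. p + s *\<^sub>R v \<in> Z}"
proof -
  have "closed ((\<lambda>s. p + s *\<^sub>R v) -` Z)"
    by (rule continuous_closed_vimage[OF compact_imp_closed[OF Z]]) (intro continuous_intros)
  then have cl: "closed {s. p + s *\<^sub>R v \<in> Z}" by (simp add: vimage_def)
  obtain B where B: "\<And>z. z \<in> Z \<Longrightarrow> norm z \<le> B" using compact_imp_bounded[OF Z] by (auto simp: bounded_iff)
  have "norm s \<le> (B + norm p) / norm v" if "p + s *\<^sub>R v \<in> Z" for s
  proof -
    have "\<bar>s\<bar> * norm v = norm (s *\<^sub>R v)" by simp
    also have "\<dots> \<le> norm (p + s *\<^sub>R v) + norm p" by (metis add_diff_cancel_left' norm_triangle_ineq4 add.commute)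
    also have "\<dots> \<le> B + norm p" using B[OF that] by simp
    finally show ?thesis using v by (simp add: field_simps)
  qed
  then have "bounded {s. p + s *\<^sub>R v \<in> Z}" by (auto simp: bounded_iff)
  with cl show ?thesis by (simp add: compact_eq_bounded_closed)
qed

lemma fib_convex:
  fixes v p :: "'a::euclidean_space"
  assumes "convex Z"
  shows "convex {s. p + s *\<^sub>R v \<in> Z}"
  unfolding convex_def
proof safe
  fix x y :: real and a b :: real
  assume xy: "p + x *\<^sub>R v \<in> Z" "p + y *\<^sub>R v \<in> Z" and ab: "0 \<le> a" "0 \<le> b" "a + b = 1"
  have e1: "a *\<^sub>R (p + x *\<^sub>R v) + b *\<^sub>R (p + y *\<^sub>R v) = (a + b) *\<^sub>R p + (a * x + b * y) *\<^sub>R v"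
    by (simp add: algebra_simps)
  have "p + (a * x + b * y) *\<^sub>R v = a *\<^sub>R (p + x *\<^sub>R v) + b *\<^sub>R (p + y *\<^sub>R v)"
    unfolding e1 using ab by simp
  also have "\<dots> \<in> Z" using assms xy ab unfolding convex_def by blast
  finally show "p + (a *\<^sub>R x + b *\<^sub>R y) *\<^sub>R v \<in> Z" by simp
qed

lemma fib_seg:
  fixes v p :: "'a::euclidean_space" and t :: real
  assumes t: "t \<ge> 0"
  shows "{s. p + s *\<^sub>R v \<in> Z + closed_segment 0 (t *\<^sub>R v)} = {s. p + s *\<^sub>R v \<in> Z} + {0..t}"
proof -
  have lin: "linear (\<lambda>r::real. r *\<^sub>R v)" by (simp add: linear_scaleR_left)
  have seg: "closed_segment 0 (t *\<^sub>R v) = (\<lambda>r. r *\<^sub>R v) ` {0..t}"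
    using closed_segment_linear_image[OF lin, of 0 t] t by (simp add: closed_segment_eq_real_ivl)
  show ?thesis
  proof safe
    fix s assume "p + s *\<^sub>R v \<in> Z + closed_segment 0 (t *\<^sub>R v)"
    then obtain z r where zr: "z \<in> Z" "r \<in> {0..t}" "p + s *\<^sub>R v = z + r *\<^sub>R v"
      unfolding seg set_plus_def by auto
    then have "p + (s - r) *\<^sub>R v = z" by (simp add: algebra_simps)
    then have "s - r \<in> {s. p + s *\<^sub>R v \<in> Z}" using zr by simp
    moreover have "s = (s - r) + r" by simp
    ultimately show "s \<in> {s. p + s *\<^sub>R v \<in> Z} + {0..t}" using zr(2) by (metis set_plus_intro)
  next
    fix s assume "s \<in> {s. p + s *\<^sub>R v \<in> Z} + {0..t}"
    then obtain q r where qr: "p + q *\<^sub>R v \<in> Z" "r \<in> {0..t}" "s = q + r" by (auto simp: set_plus_def)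
    have "p + s *\<^sub>R v = (p + q *\<^sub>R v) + r *\<^sub>R v" using qr by (simp add: algebra_simps)
    moreover have "r *\<^sub>R v \<in> closed_segment 0 (t *\<^sub>R v)" unfolding seg using qr by auto
    ultimately show "p + s *\<^sub>R v \<in> Z + closed_segment 0 (t *\<^sub>R v)" using qr(1) by (metis set_plus_intro)
  qed
qed



lemma seg_pos:
  fixes u b :: "'a::euclidean_space"
  assumes b: "b \<in> Basis" and ub: "u \<bullet> b > 0"
    and A: "compact A" "convex A" and K: "compact K" and AK: "A \<subseteq> K"
  shows "measure lebesgue (A + closed_segment 0 u) + measure lebesgue K
       \<le> measure lebesgue (K + closed_segment 0 u) + measure lebesgue A"
proof -
  define t where "t = u \<bullet> b"
  define v where "v = u /\<^sub>R t"
  have t: "t > 0" "t \<ge> 0" using ub by (auto simp: t_def)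
  have vb: "v \<bullet> b = 1" using t by (simp add: v_def t_def)
  have uv: "u = t *\<^sub>R v" using t by (simp add: v_def)
  have v0: "v \<noteq> 0" using vb by auto
  show ?thesis
  proof (rule dir_ineq[OF b vb])
    show "compact (K + closed_segment 0 u)" "compact A" "compact (A + closed_segment 0 u)" "compact K"
      using A K by (auto intro: compact_set_plus)
    fix p :: 'a
    have "emeasure lborel ({s. p + s *\<^sub>R v \<in> A} + {0..t}) + emeasure lborel {s. p + s *\<^sub>R v \<in> K}
        \<le> emeasure lborel ({s. p + s *\<^sub>R v \<in> K} + {0..t}) + emeasure lborel {s. p + s *\<^sub>R v \<in> A}"
      by (rule oneD[OF t(2) fib_compact[OF v0 K] fib_compact[OF v0 A(1)] fib_convex[OF A(2)]]) (use AK in auto)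
    then show "emeasure lborel {s. p + s *\<^sub>R v \<in> A + closed_segment 0 u} + emeasure lborel {s. p + s *\<^sub>R v \<in> K}
       \<le> emeasure lborel {s. p + s *\<^sub>R v \<in> K + closed_segment 0 u} + emeasure lborel {s. p + s *\<^sub>R v \<in> A}"
      unfolding uv fib_seg[OF t(2)] .
  qed
qed

lemma seg_ineq:
  fixes u :: "'a::euclidean_space"
  assumes A: "compact A" "convex A" and K: "compact K" and AK: "A \<subseteq> K"
  shows "measure lebesgue (A + closed_segment 0 u) + measure lebesgue K
       \<le> measure lebesgue (K + closed_segment 0 u) + measure lebesgue A"
proof (cases "u = 0")
  case True
  have "measure lebesgue A \<le> measure lebesgue K"
    using A K AK by (intro measure_mono_fmeasurable) (auto intro: lmeasurable_compact fmeasurableD)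
  then show ?thesis using True by simp
next
  case False
  then obtain b where b: "b \<in> Basis" "u \<bullet> b \<noteq> 0" using euclidean_all_zero_iff[of u] by blast
  show ?thesis
  proof (cases "u \<bullet> b > 0")
    case True then show ?thesis using seg_pos[OF b(1) True A K AK] by simp
  next
    case False
    then have nb: "(- u) \<bullet> b > 0" using b by simp
    have tr: "X + closed_segment 0 u = (\<lambda>x. u + x) ` (X + closed_segment 0 (- u))" for X :: "'a set"
    proof -
      have "closed_segment 0 u = (\<lambda>x. u + x) ` closed_segment 0 (- u)"
        using closed_segment_translation[of u 0 "- u"] closed_segment_commute[of 0 u] by simp
      moreover have "X + ((\<lambda>x. u + x) ` S) = (\<lambda>x. u + x) ` (X + S)" for S
      proof (intro set_eqI iffI)
        fix z assume "z \<in> X + (\<lambda>x. u + x) ` S"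
        then obtain a s where as: "a \<in> X" "s \<in> S" "z = a + (u + s)" by (auto simp: set_plus_def)
        then have "a + s \<in> X + S" by auto
        moreover have "z = u + (a + s)" using as by (simp add: algebra_simps)
        ultimately show "z \<in> (\<lambda>x. u + x) ` (X + S)" by blast
      next
        fix z assume "z \<in> (\<lambda>x. u + x) ` (X + S)"
        then obtain a s where as: "a \<in> X" "s \<in> S" "z = u + (a + s)" by (auto simp: set_plus_def)
        then have "u + s \<in> (\<lambda>x. u + x) ` S" by auto
        moreover have "z = a + (u + s)" using as by (simp add: algebra_simps)
        ultimately show "z \<in> X + (\<lambda>x. u + x) ` S" using as(1) by (metis set_plus_intro)
      qed
      ultimately show ?thesis by simp
    qed
    have m: "measure lebesgue (X + closed_segment 0 u) = measure lebesgue (X + closed_segment 0 (- u))" for X :: "'a set"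
      unfolding tr by (rule measure_translation)
    show ?thesis unfolding m using seg_pos[OF b(1) nb A K AK] .
  qed
qed



lemma plus_image_transl:
  fixes X S :: "'a::ab_group_add set"
  shows "X + ((\<lambda>x. d + x) ` S) = (\<lambda>x. d + x) ` (X + S)"
proof (intro set_eqI iffI)
  fix z assume "z \<in> X + (\<lambda>x. d + x) ` S"
  then obtain a s where as: "a \<in> X" "s \<in> S" "z = a + (d + s)" by (auto simp: set_plus_def)
  then have "a + s \<in> X + S" by auto
  moreover have "z = d + (a + s)" using as by (simp add: algebra_simps)
  ultimately show "z \<in> (\<lambda>x. d + x) ` (X + S)" by blast
next
  fix z assume "z \<in> (\<lambda>x. d + x) ` (X + S)"
  then obtain a s where as: "a \<in> X" "s \<in> S" "z = d + (a + s)" by (auto simp: set_plus_def)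
  then have "d + s \<in> (\<lambda>x. d + x) ` S" by auto
  moreover have "z = a + (d + s)" using as by (simp add: algebra_simps)
  ultimately show "z \<in> X + (\<lambda>x. d + x) ` S" using as(1) by (metis set_plus_intro)
qed

lemma meas_transl:
  fixes X S :: "'a::euclidean_space set"
  shows "measure lebesgue (X + (\<lambda>x. d + x) ` S) = measure lebesgue (X + S)"
  unfolding plus_image_transl by (rule measure_translation)

lemma segC:
  fixes A C :: "'a::euclidean_space set"
  assumes A: "compact A" "convex A" and C: "compact C" "C \<noteq> {}"
  shows "measure lebesgue (A + closed_segment a c) + measure lebesgue (A + C)
       \<le> measure lebesgue (A + closed_segment a c + C) + measure lebesgue A"
proof -
  obtain c0 where c0: "c0 \<in> C" using C by auto
  define C' where "C' = (\<lambda>x. x - c0) ` C"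
  have CC': "C = (\<lambda>x. c0 + x) ` C'" unfolding C'_def image_image by simp
  have cC': "compact C'" unfolding C'_def using C(1) by (intro compact_continuous_image continuous_intros)
  define s0 where "s0 = closed_segment 0 (c - a)"
  have Ss0: "closed_segment a c = (\<lambda>x. a + x) ` s0"
    unfolding s0_def using closed_segment_translation[of a 0 "c - a"] by simp
  define K where "K = A + C'"
  have K: "compact K" unfolding K_def using A cC' by (intro compact_set_plus)
  have AK: "A \<subseteq> K"
  proof
    fix x assume "x \<in> A"
    moreover have "0 \<in> C'" using c0 unfolding C'_def by force
    ultimately have "x + 0 \<in> K" unfolding K_def by (intro set_plus_intro)
    then show "x \<in> K" by simp
  qed
  have main: "measure lebesgue (A + s0) + measure lebesgue K \<le> measure lebesgue (K + s0) + measure lebesgue A"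
    unfolding s0_def by (rule seg_ineq[OF A K AK])
  have e1: "measure lebesgue (A + closed_segment a c) = measure lebesgue (A + s0)"
    unfolding Ss0 by (rule meas_transl)
  have e2: "measure lebesgue (A + C) = measure lebesgue K"
    unfolding K_def CC' by (rule meas_transl)
  have "measure lebesgue (A + closed_segment a c + C) = measure lebesgue ((A + closed_segment a c) + C')"
    unfolding CC' by (rule meas_transl)
  also have "(A + closed_segment a c) + C' = K + (\<lambda>x. a + x) ` s0"
    unfolding K_def Ss0 by (simp add: ac_simps)
  also have "measure lebesgue \<dots> = measure lebesgue (K + s0)" by (rule meas_transl)
  finally have e3: "measure lebesgue (A + closed_segment a c + C) = measure lebesgue (K + s0)" .
  show ?thesis using main e1 e2 e3 by linarith
qed

definition zsum :: "(nat \<Rightarrow> 'a::euclidean_space) \<Rightarrow> (nat \<Rightarrow> 'a) \<Rightarrow> nat \<Rightarrow> 'a set" where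
  "zsum a b k = {(\<Sum>i<k. x i) | x. \<forall>i<k. x i \<in> closed_segment (a i) (b i)}"

lemma zsum_0: "zsum a b 0 = {0}"
  by (auto simp: zsum_def)

lemma zsum_Suc: "zsum a b (Suc k) = zsum a b k + closed_segment (a k) (b k)"
proof (intro set_eqI iffI)
  fix z assume "z \<in> zsum a b (Suc k)"
  then obtain x where x: "z = (\<Sum>i<Suc k. x i)" "\<forall>i<Suc k. x i \<in> closed_segment (a i) (b i)"
    by (auto simp: zsum_def)
  have "(\<Sum>i<k. x i) \<in> zsum a b k" using x(2) by (auto simp: zsum_def)
  moreover have "x k \<in> closed_segment (a k) (b k)" using x(2) by auto
  moreover have "z = (\<Sum>i<k. x i) + x k" using x(1) by simp
  ultimately show "z \<in> zsum a b k + closed_segment (a k) (b k)" by (metis set_plus_intro)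
next
  fix z assume "z \<in> zsum a b k + closed_segment (a k) (b k)"
  then obtain y x where yx: "y \<in> closed_segment (a k) (b k)" "\<forall>i<k. x i \<in> closed_segment (a i) (b i)"
      "z = (\<Sum>i<k. x i) + y"
    by (auto simp: zsum_def set_plus_def)
  define x' where "x' = x(k := y)"
  have "(\<Sum>i<k. x' i) = (\<Sum>i<k. x i)" unfolding x'_def by (intro sum.cong) auto
  then have "z = (\<Sum>i<Suc k. x' i)" using yx(3) by (simp add: x'_def)
  moreover have "\<forall>i<Suc k. x' i \<in> closed_segment (a i) (b i)"
    using yx(1,2) by (auto simp: x'_def less_Suc_eq)
  ultimately show "z \<in> zsum a b (Suc k)" unfolding zsum_def by blast
qed

lemma zsum_compact_convex: "compact (zsum a b k) \<and> convex (zsum a b k)"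
  by (induction k) (auto simp: zsum_0 zsum_Suc intro: compact_set_plus convex_set_plus)

lemma zono_ineq:
  fixes A C :: "'a::euclidean_space set"
  assumes A: "compact A" "convex A" and C: "compact C" "C \<noteq> {}"
  shows "measure lebesgue (A + zsum a b k) + measure lebesgue (A + C)
       \<le> measure lebesgue (A + zsum a b k + C) + measure lebesgue A"
  using A
proof (induction k arbitrary: A)
  case 0
  then show ?case by (simp add: zsum_0)
next
  case (Suc k)
  define Z where "Z = zsum a b k"
  define S where "S = closed_segment (a k) (b k)"
  have Z: "compact Z" "convex Z" using zsum_compact_convex unfolding Z_def by auto
  have A': "compact (A + Z)" "convex (A + Z)" using Suc.prems Z by (auto intro: compact_set_plus convex_set_plus)
  have IH: "measure lebesgue (A + Z) + measure lebesgue (A + C) \<le> measure lebesgue (A + Z + C) + measure lebesgue A"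
    unfolding Z_def using Suc.IH[OF Suc.prems] .
  have st: "measure lebesgue (A + Z + S) + measure lebesgue (A + Z + C)
       \<le> measure lebesgue (A + Z + S + C) + measure lebesgue (A + Z)"
    unfolding S_def by (rule segC[OF A' C])
  have "zsum a b (Suc k) = Z + S" unfolding Z_def S_def by (rule zsum_Suc)
  then show ?case using IH st by (simp add: add.assoc)
qed



lemma meas_mono_cpt:
  fixes X Y :: "'a::euclidean_space set"
  assumes "compact X" "compact Y" "X \<subseteq> Y"
  shows "measure lebesgue X \<le> measure lebesgue Y"
  using assms by (intro measure_mono_fmeasurable) (auto intro: lmeasurable_compact fmeasurableD)

lemma cball_limit:
  fixes X :: "'a::euclidean_space set"
  assumes X: "compact X" and r: "r > 0"
  shows "(\<lambda>m. measure lebesgue (X + cball 0 (r / real (Suc m)))) \<longlonglongrightarrow> measure lebesgue X"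
proof -
  define D where "D = (\<lambda>m. X + cball (0::'a) (r / real (Suc m)))"
  have cD: "compact (D m)" for m unfolding D_def using X by (intro compact_set_plus compact_cball)
  have "range D \<subseteq> sets lebesgue" using cD by (auto intro: lmeasurable_compact fmeasurableD)
  moreover have "decseq D"
  proof (rule decseq_SucI)
    fix m
    have "r / real (Suc (Suc m)) \<le> r / real (Suc m)" using r by (simp add: frac_le)
    then have "cball (0::'a) (r / real (Suc (Suc m))) \<subseteq> cball 0 (r / real (Suc m))" by auto
    then show "D (Suc m) \<subseteq> D m" unfolding D_def by (intro set_plus_mono2) auto
  qed
  moreover have "emeasure lebesgue (D m) \<noteq> \<infinity>" for m
    using lmeasurable_compact[OF cD[of m]] unfolding fmeasurable_def by (metis (mono_tags) mem_Collect_eq less_irrefl)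
  ultimately have lim: "(\<lambda>m. measure lebesgue (D m)) \<longlonglongrightarrow> measure lebesgue (\<Inter>m. D m)"
    by (rule Lim_measure_decseq)
  have "(\<Inter>m. D m) = X"
  proof
    show "X \<subseteq> (\<Inter>m. D m)"
    proof
      fix x assume "x \<in> X"
      then have "x + 0 \<in> D m" for m unfolding D_def using r by (intro set_plus_intro) auto
      then show "x \<in> (\<Inter>m. D m)" by simp
    qed
  next
    show "(\<Inter>m. D m) \<subseteq> X"
    proof
      fix y assume y: "y \<in> (\<Inter>m. D m)"
      have "y \<in> closure X" unfolding closure_approachable
      proof safe
        fix e :: real assume e: "e > 0"
        obtain m :: nat where m: "r / e < real m" using reals_Archimedean2 by blast
        have "r / real (Suc m) < e"
          using m e r by (simp add: field_simps)
        from y have "y \<in> D m" by auto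
        then obtain x z where xz: "x \<in> X" "z \<in> cball 0 (r / real (Suc m))" "y = x + z"
          unfolding D_def by (auto simp: set_plus_def)
        have "dist x y = norm z" using xz by (simp add: dist_norm)
        also have "\<dots> \<le> r / real (Suc m)" using xz by simp
        finally show "\<exists>x\<in>X. dist x y < e" using xz(1) \<open>r / real (Suc m) < e\<close> by force
      qed
      then show "y \<in> X" using X by (simp add: compact_imp_closed)
    qed
  qed
  with lim show ?thesis unfolding D_def by simp
qed



lemma eps_step:
  fixes A B C :: "'a::euclidean_space set"
  assumes A: "compact A" "convex A" and B: "zonoid B" and C: "compact C" "C \<noteq> {}" and e: "\<epsilon> > 0"
  shows "measure lebesgue (A + B) + measure lebesgue (A + C)
     \<le> measure lebesgue (A + B + C + cball 0 (2 * \<epsilon>)) + measure lebesgue (A + cball 0 \<epsilon>)"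
proof -
  from B obtain P where Bc: "compact B" "B \<noteq> {}" and Pz: "\<And>k. zonotope (P k)"
    and lim: "(\<lambda>k. hausdorff_dist (P k) B) \<longlonglongrightarrow> 0" unfolding zonoid_def by blast
  from order_tendstoD(2)[OF lim e] obtain k where hk: "hausdorff_dist (P k) B < \<epsilon>"
    by (auto simp: eventually_sequentially)
  define Pk where "Pk = P k"
  from Pz[of k] obtain n a b where Pkz: "Pk = zsum a b n"
    unfolding zonotope_def zsum_def Pk_def by blast
  have Pc: "compact Pk" "convex Pk" using zsum_compact_convex Pkz by auto
  have "(\<Sum>i<n. a i) \<in> Pk" unfolding Pkz zsum_def by (auto intro: ends_in_segment)
  then have Pne: "Pk \<noteq> {}" by auto
  have h1: "(SUP x\<in>Pk. infdist x B) < \<epsilon>" and h2: "(SUP y\<in>B. infdist y Pk) < \<epsilon>"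
    using hk unfolding hausdorff_dist_def Pk_def by auto
  have incl: "S \<subseteq> T + cball 0 \<epsilon>" if S: "compact S" and T: "compact T" "T \<noteq> {}"
     and h: "(SUP y\<in>S. infdist y T) < \<epsilon>" for S T :: "'a set"
  proof
    fix y assume y: "y \<in> S"
    have "bdd_above ((\<lambda>y. infdist y T) ` S)"
      by (intro bounded_imp_bdd_above compact_imp_bounded compact_continuous_image S continuous_intros)
    then have "infdist y T \<le> (SUP y\<in>S. infdist y T)" using y by (intro cSUP_upper)
    with h have lt: "infdist y T < \<epsilon>" by linarith
    obtain p where p: "p \<in> T" "infdist y T = dist y p"
      using infdist_attains_inf[OF compact_imp_closed[OF T(1)] T(2)] by blast
    have "y - p \<in> cball 0 \<epsilon>" using lt p by (simp add: dist_norm norm_minus_commute)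
    then have "p + (y - p) \<in> T + cball 0 \<epsilon>" using p(1) by (intro set_plus_intro)
    then show "y \<in> T + cball 0 \<epsilon>" by simp
  qed
  have BP: "B \<subseteq> Pk + cball 0 \<epsilon>" by (rule incl[OF Bc(1) Pc(1) Pne h2])
  have PB: "Pk \<subseteq> B + cball 0 \<epsilon>" by (rule incl[OF Pc(1) Bc(1) Bc(2) h1])
  define A' where "A' = A + cball (0::'a) \<epsilon>"
  have A': "compact A'" "convex A'" unfolding A'_def using A
    by (auto intro: compact_set_plus convex_set_plus)
  have AA': "A \<subseteq> A'"
  proof
    fix x assume "x \<in> A" then have "x + 0 \<in> A'" unfolding A'_def using e by (intro set_plus_intro) auto
    then show "x \<in> A'" by simp
  qed
  have Z: "measure lebesgue (A' + Pk) + measure lebesgue (A' + C) \<le> measure lebesgue (A' + Pk + C) + measure lebesgue A'"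
    unfolding Pkz by (rule zono_ineq[OF A' C])
  have m1: "measure lebesgue (A + B) \<le> measure lebesgue (A' + Pk)"
  proof (rule meas_mono_cpt)
    show "compact (A + B)" "compact (A' + Pk)" using A Bc A' Pc by (auto intro: compact_set_plus)
    have "A + B \<subseteq> A + (Pk + cball 0 \<epsilon>)" using BP by (intro set_plus_mono2) auto
    also have "\<dots> = A' + Pk" unfolding A'_def by (simp add: ac_simps)
    finally show "A + B \<subseteq> A' + Pk" .
  qed
  have m2: "measure lebesgue (A + C) \<le> measure lebesgue (A' + C)"
    using A C A' AA' by (intro meas_mono_cpt compact_set_plus set_plus_mono2) auto
  have m3: "measure lebesgue (A' + Pk + C) \<le> measure lebesgue (A + B + C + cball 0 (2 * \<epsilon>))"
  proof (rule meas_mono_cpt)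
    show "compact (A' + Pk + C)" "compact (A + B + C + cball 0 (2 * \<epsilon>))"
      using A' Pc C A Bc by (auto intro!: compact_set_plus)
    have cc: "cball (0::'a) \<epsilon> + cball 0 \<epsilon> \<subseteq> cball 0 (2 * \<epsilon>)"
    proof
      fix z assume "z \<in> cball (0::'a) \<epsilon> + cball 0 \<epsilon>"
      then obtain x y where "x \<in> cball (0::'a) \<epsilon>" "y \<in> cball 0 \<epsilon>" "z = x + y" by (auto simp: set_plus_def)
      then show "z \<in> cball 0 (2 * \<epsilon>)" using norm_triangle_ineq[of x y] by simp
    qed
    have "A' + Pk + C = (A + C) + (cball 0 \<epsilon> + Pk)" unfolding A'_def by (simp add: ac_simps)
    also have "\<dots> \<subseteq> (A + C) + (cball 0 \<epsilon> + (B + cball 0 \<epsilon>))" using PB by (intro set_plus_mono2) auto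
    also have "\<dots> = (A + C + B) + (cball 0 \<epsilon> + cball 0 \<epsilon>)" by (simp add: ac_simps)
    also have "\<dots> \<subseteq> (A + C + B) + cball 0 (2 * \<epsilon>)" using cc by (intro set_plus_mono2) auto
    also have "\<dots> = A + B + C + cball 0 (2 * \<epsilon>)" by (simp add: ac_simps)
    finally show "A' + Pk + C \<subseteq> A + B + C + cball 0 (2 * \<epsilon>)" .
  qed
  show ?thesis using Z m1 m2 m3 unfolding A'_def by linarith
qed

theorem theorem3p12:
  fixes A B C :: "'a::euclidean_space set"
  assumes "compact A" and "convex A"
    and "zonoid B"
    and "compact C" and "C \<noteq> {}"
  shows "measure lebesgue (A + B + C) + measure lebesgue A
           \<ge> measure lebesgue (A + B) + measure lebesgue (A + C)"
proof -
  have Bc: "compact B" using assms(3) unfolding zonoid_def by blast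
  have cABC: "compact (A + B + C)" using assms Bc by (auto intro!: compact_set_plus)
  have l1: "(\<lambda>m. measure lebesgue (A + B + C + cball 0 (2 / real (Suc m)))) \<longlonglongrightarrow> measure lebesgue (A + B + C)"
    by (rule cball_limit[OF cABC]) simp
  have l2: "(\<lambda>m. measure lebesgue (A + cball 0 (1 / real (Suc m)))) \<longlonglongrightarrow> measure lebesgue A"
    by (rule cball_limit[OF assms(1)]) simp
  have st: "measure lebesgue (A + B) + measure lebesgue (A + C)
     \<le> measure lebesgue (A + B + C + cball 0 (2 / real (Suc m))) + measure lebesgue (A + cball 0 (1 / real (Suc m)))" for m
    using eps_step[OF assms(1,2,3,4,5), of "1 / real (Suc m)"] by simp
  show ?thesis
    by (rule LIMSEQ_le_const[OF tendsto_add[OF l1 l2]]) (use st in blast)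
qed


end
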